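(* Let $H$ be a separable complex Hilbert space and $X$ a locally compact space with positive Borel measure $\mu$, and assume $F\subset J_1:=L^1(X,H)$, with norm $\|f\|_{J_1}=\int_X\|f(x)\|_H\,d\mu(x)$. Suppose the map $\sigma:F_0\to\overline{F}_0$ is continuous in the topology of $J_1$. Then the map $U:F_0\to U(H)$ is continuous from the topology of $J_1$ to the operator norm topology.
   Context: A frame on $H$ is a map $f:X\to H$ such that $x\mapsto\langle\phi,f(x)\rangle$ is measurable for every $\phi\in H$ and there exist $0<A\le B$ with $A\|\phi\|^2\le\int_X|\langle\phi,f(x)\rangle|^2d\mu(x)\le B\|\phi\|^2$ for all $\phi$; it is Parseval if $A=B=1$. $U(H)$ is the unitary group. $F$ is the set of frames $f$ with $\sup_x\|f(x)\|_H<\infty$, $F_0$ the Parseval ones; $(Af)(x)=A[f(x)]$. $\overline{F}_0\subset F_0$ is a fixed transversal of $F_0/U(H)$ (exactly one element from each orbit $\{Vf:V\in U(H)\}$); each $f\in F_0$ factors uniquely as $f=U(f)\sigma(f)$ with $U(f)\in U(H)$ and $\sigma(f)\in\overline{F}_0$, defining the maps $U$ and $\sigma$. *)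

theory Defs
  imports "HOL-Analysis.Analysis"
begin

class complex_vector = real_vector +
  fixes scaleC :: "complex \<Rightarrow> 'a \<Rightarrow> 'a" (infixr \<open>*\<^sub>C\<close> 75)
  assumes scaleC_add_right: "a *\<^sub>C (x + y) = a *\<^sub>C x + a *\<^sub>C y"
    and scaleC_add_left: "(a + b) *\<^sub>C x = a *\<^sub>C x + b *\<^sub>C x"
    and scaleC_scaleC: "a *\<^sub>C (b *\<^sub>C x) = (a * b) *\<^sub>C x"
    and scaleC_one: "1 *\<^sub>C x = x"
    and scaleR_scaleC: "scaleR r x = complex_of_real r *\<^sub>C x"

class complex_inner = complex_vector + real_normed_vector +
  fixes cinner :: "'a \<Rightarrow> 'a \<Rightarrow> complex"
  assumes cinner_commute: "cinner x y = cnj (cinner y x)"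
    and cinner_add_left: "cinner (x + y) z = cinner x z + cinner y z"
    and cinner_scaleC_left: "cinner (r *\<^sub>C x) y = cnj r * cinner x y"
    and cinner_self_real: "Im (cinner x x) = 0"
    and cinner_self_nonneg: "0 \<le> Re (cinner x x)"
    and cinner_self_eq_0: "cinner x x = 0 \<longleftrightarrow> x = 0"
    and norm_eq_sqrt_cinner: "norm x = sqrt (Re (cinner x x))"

class chilbert_space = complex_inner + complete_space

subclass (in chilbert_space) banach ..

definition clinear :: "('a::complex_vector \<Rightarrow> 'b::complex_vector) \<Rightarrow> bool" where
  "clinear V \<longleftrightarrow> (\<forall>x y. V (x + y) = V x + V y) \<and> (\<forall>c x. V (c *\<^sub>C x) = c *\<^sub>C V x)"

definition unitary :: "('h::complex_inner \<Rightarrow> 'h) \<Rightarrow> bool" where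
  "unitary V \<longleftrightarrow> clinear V \<and> surj V \<and> (\<forall>x y. cinner (V x) (V y) = cinner x y)"

definition frame_with_bounds ::
  "'x measure \<Rightarrow> ('x \<Rightarrow> 'h::complex_inner) \<Rightarrow> real \<Rightarrow> real \<Rightarrow> bool" where
  "frame_with_bounds M f A B \<longleftrightarrow>
     0 < A \<and> A \<le> B \<and>
     (\<forall>\<phi>. (\<lambda>x. cinner \<phi> (f x)) \<in> borel_measurable M) \<and>
     (\<forall>\<phi>. ennreal (A * (norm \<phi>)\<^sup>2) \<le> (\<integral>\<^sup>+ x. ennreal ((cmod (cinner \<phi> (f x)))\<^sup>2) \<partial>M)
        \<and> (\<integral>\<^sup>+ x. ennreal ((cmod (cinner \<phi> (f x)))\<^sup>2) \<partial>M) \<le> ennreal (B * (norm \<phi>)\<^sup>2))"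

definition is_frame :: "'x measure \<Rightarrow> ('x \<Rightarrow> 'h::complex_inner) \<Rightarrow> bool" where
  "is_frame M f \<longleftrightarrow> (\<exists>A B. frame_with_bounds M f A B)"

definition is_parseval_frame :: "'x measure \<Rightarrow> ('x \<Rightarrow> 'h::complex_inner) \<Rightarrow> bool" where
  "is_parseval_frame M f \<longleftrightarrow> frame_with_bounds M f 1 1"

definition bounded_frames :: "'x measure \<Rightarrow> ('x \<Rightarrow> 'h::complex_inner) set" where
  "bounded_frames M = {f. is_frame M f \<and> (\<exists>C. \<forall>x\<in>space M. norm (f x) \<le> C)}"

definition parseval_bounded_frames :: "'x measure \<Rightarrow> ('x \<Rightarrow> 'h::complex_inner) set" where
  "parseval_bounded_frames M = {f \<in> bounded_frames M. is_parseval_frame M f}"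

definition J1_dist :: "'x measure \<Rightarrow> ('x \<Rightarrow> 'h::{banach,second_countable_topology}) \<Rightarrow> ('x \<Rightarrow> 'h) \<Rightarrow> real" where
  "J1_dist M f g = (\<integral> x. norm (f x - g x) \<partial>M)"

end

theory Submission
  imports Defs
begin


lemma my_cinner_diff_left: "cinner (a - b) z = cinner a z - cinner b z"
proof -
  have "cinner (a - b + b) z = cinner (a - b) z + cinner b z" by (rule cinner_add_left)
  then show ?thesis by simp
qed

lemma my_cinner_add_right: "cinner x (y + z) = cinner x y + cinner x z"
  by (metis cinner_add_left cinner_commute complex_cnj_add)

lemma my_cinner_diff_right: "cinner x (a - b) = cinner x a - cinner x b"
  by (metis cinner_commute complex_cnj_diff my_cinner_diff_left)

lemma my_cinner_scaleC_right: "cinner x (c *\<^sub>C y) = c * cinner x y"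
  by (metis cinner_commute cinner_scaleC_left complex_cnj_cnj complex_cnj_mult)

lemma my_cinner_self: "cinner x x = complex_of_real ((norm x)\<^sup>2)"
proof -
  have "(norm x)\<^sup>2 = Re (cinner x x)" using norm_eq_sqrt_cinner[of x] cinner_self_nonneg[of x] by simp
  then show ?thesis using cinner_self_real[of x] by (simp add: complex_eq_iff)
qed

lemma my_cs: "cmod (cinner x y) \<le> norm x * norm y"
proof (cases "y = 0")
  case True
  have "cinner x 0 = 0" using my_cinner_diff_right[of x 0 0] by simp
  then show ?thesis using True by simp
next
  case False
  define a where "a = cinner x y"
  define r where "r = (norm y)\<^sup>2"
  have rpos: "r > 0" using False unfolding r_def by simp
  define c where "c = cnj a / complex_of_real r"
  have "0 \<le> Re (cinner (x - c *\<^sub>C y) (x - c *\<^sub>C y))" by (rule cinner_self_nonneg)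
  also have "cinner (x - c *\<^sub>C y) (x - c *\<^sub>C y) = cinner x x - c * a - cnj c * cnj a + cnj c * c * complex_of_real r"
    unfolding a_def r_def
    by (simp add: my_cinner_diff_left my_cinner_diff_right my_cinner_scaleC_right cinner_scaleC_left
        my_cinner_self[of y] algebra_simps cinner_commute[of y x])
  also have "Re \<dots> = (norm x)\<^sup>2 - (cmod a)\<^sup>2 / r"
  proof -
    have h: "cmod a * cmod a = Re a * Re a + Im a * Im a" using cmod_power2[of a] by (simp add: power2_eq_square)
    show ?thesis using rpos h unfolding c_def
      by (simp add: my_cinner_self power2_eq_square field_simps)
  qed
  finally have "(cmod a)\<^sup>2 \<le> (norm x)\<^sup>2 * r" using rpos by (simp add: field_simps)
  then have "(cmod a)\<^sup>2 \<le> (norm x * norm y)\<^sup>2" unfolding r_def by (simp add: power_mult_distrib)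
  then show ?thesis unfolding a_def by (meson norm_ge_zero power2_le_imp_le mult_nonneg_nonneg)
qed



lemma cpoint: "(cmod (a - b))\<^sup>2 + (cmod b)\<^sup>2 \<le> (cmod a)\<^sup>2 + 2 * cmod (a - b) * cmod b"
proof -
  have "\<bar>cmod (a - b) - cmod (-b)\<bar> \<le> cmod ((a - b) - (-b))" by (rule norm_triangle_ineq3)
  then have "\<bar>cmod (a - b) - cmod b\<bar> \<le> \<bar>cmod a\<bar>" by simp
  then have "(cmod (a - b) - cmod b)\<^sup>2 \<le> (cmod a)\<^sup>2"
    using abs_le_square_iff[of "cmod (a - b) - cmod b" "cmod a"] by simp
  then show ?thesis by (simp add: power2_eq_square algebra_simps)
qed

lemma parseval_eq:
  assumes "is_parseval_frame M h"
  shows "(\<integral>\<^sup>+ x. ennreal ((cmod (cinner \<phi> (h x)))\<^sup>2) \<partial>M) = ennreal ((norm \<phi>)\<^sup>2)"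
  using assms unfolding is_parseval_frame_def frame_with_bounds_def
  by (metis antisym mult_1)

lemma parseval_meas:
  assumes "is_parseval_frame M h"
  shows "(\<lambda>x. cinner \<phi> (h x)) \<in> borel_measurable M"
  using assms unfolding is_parseval_frame_def frame_with_bounds_def by blast

lemma key:
  assumes p1: "is_parseval_frame M h1" and p2: "is_parseval_frame M h2"
    and bnd: "\<forall>x\<in>space M. norm (h2 x) \<le> C"
    and int: "integrable M (\<lambda>x. norm (h1 x - h2 x))"
  shows "(\<integral>\<^sup>+ x. ennreal ((cmod (cinner u (h1 x - h2 x)))\<^sup>2) \<partial>M)
     \<le> ennreal (2 * C * (norm u)\<^sup>2 * (\<integral>x. norm (h1 x - h2 x) \<partial>M))"
proof -
  have m1: "(\<lambda>x. cinner u (h1 x)) \<in> borel_measurable M" by (rule parseval_meas[OF p1])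
  have m2: "(\<lambda>x. cinner u (h2 x)) \<in> borel_measurable M" by (rule parseval_meas[OF p2])
  have md: "(\<lambda>x. cinner u (h1 x - h2 x)) \<in> borel_measurable M"
    using m1 m2 by (simp add: my_cinner_diff_right)
  have mn: "(\<lambda>x. norm (h1 x - h2 x)) \<in> borel_measurable M" using int by blast
  define K where "K = 2 * C * (norm u)\<^sup>2"
  have pw: "ennreal ((cmod (cinner u (h1 x - h2 x)))\<^sup>2) + ennreal ((cmod (cinner u (h2 x)))\<^sup>2)
      \<le> ennreal ((cmod (cinner u (h1 x)))\<^sup>2) + ennreal K * ennreal (norm (h1 x - h2 x))"
    if x: "x \<in> space M" for x
  proof -
    define a where "a = cinner u (h1 x)"
    define b where "b = cinner u (h2 x)"
    have d: "cinner u (h1 x - h2 x) = a - b" unfolding a_def b_def by (rule my_cinner_diff_right)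
    have C0: "0 \<le> C" using bnd x norm_ge_zero order_trans by blast
    have ab: "cmod (a - b) \<le> norm u * norm (h1 x - h2 x)" using d my_cs by metis
    have bb: "cmod b \<le> norm u * C"
      using my_cs[of u "h2 x"] bnd x unfolding b_def
      by (meson mult_left_mono norm_ge_zero order_trans)
    have "2 * cmod (a - b) * cmod b \<le> 2 * (norm u * norm (h1 x - h2 x)) * (norm u * C)"
      using ab bb by (intro mult_mono) auto
    also have "\<dots> = K * norm (h1 x - h2 x)" unfolding K_def by (simp add: power2_eq_square)
    finally have "(cmod (a - b))\<^sup>2 + (cmod b)\<^sup>2 \<le> (cmod a)\<^sup>2 + K * norm (h1 x - h2 x)"
      using cpoint[of a b] by linarith
    moreover have "K \<ge> 0" unfolding K_def using C0 by simp
    ultimately show ?thesis unfolding d a_def[symmetric] b_def[symmetric]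
      by (simp add: ennreal_plus[symmetric] ennreal_mult[symmetric] del: ennreal_plus)
  qed
  have "(\<integral>\<^sup>+ x. ennreal ((cmod (cinner u (h1 x - h2 x)))\<^sup>2) \<partial>M) + ennreal ((norm u)\<^sup>2)
     = (\<integral>\<^sup>+ x. ennreal ((cmod (cinner u (h1 x - h2 x)))\<^sup>2) + ennreal ((cmod (cinner u (h2 x)))\<^sup>2) \<partial>M)"
    using md m2 by (subst nn_integral_add) (auto simp: parseval_eq[OF p2])
  also have "\<dots> \<le> (\<integral>\<^sup>+ x. ennreal ((cmod (cinner u (h1 x)))\<^sup>2) + ennreal K * ennreal (norm (h1 x - h2 x)) \<partial>M)"
    by (rule nn_integral_mono) (rule pw)
  also have "\<dots> = ennreal ((norm u)\<^sup>2) + ennreal K * (\<integral>\<^sup>+ x. ennreal (norm (h1 x - h2 x)) \<partial>M)"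
    using m1 mn by (subst nn_integral_add) (auto simp: parseval_eq[OF p1] nn_integral_cmult)
  also have "(\<integral>\<^sup>+ x. ennreal (norm (h1 x - h2 x)) \<partial>M) = ennreal (\<integral>x. norm (h1 x - h2 x) \<partial>M)"
    using int by (subst nn_integral_eq_integral) auto
  finally have "(\<integral>\<^sup>+ x. ennreal ((cmod (cinner u (h1 x - h2 x)))\<^sup>2) \<partial>M) + ennreal ((norm u)\<^sup>2)
     \<le> ennreal ((norm u)\<^sup>2) + ennreal K * ennreal (\<integral>x. norm (h1 x - h2 x) \<partial>M)" .
  then have "(\<integral>\<^sup>+ x. ennreal ((cmod (cinner u (h1 x - h2 x)))\<^sup>2) \<partial>M)
     \<le> ennreal K * ennreal (\<integral>x. norm (h1 x - h2 x) \<partial>M)"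
    by (simp add: add.commute ennreal_add_left_cancel_le)
  also have "\<dots> = ennreal (K * (\<integral>x. norm (h1 x - h2 x) \<partial>M))"
    by (simp add: ennreal_mult'' )
  finally show ?thesis unfolding K_def .
qed



lemma unitary_norm: "unitary V \<Longrightarrow> norm (V v) = norm v"
  unfolding unitary_def by (metis norm_eq_sqrt_cinner)

lemma sq_ineq: "(cmod (p - q))\<^sup>2 \<le> 2 * (cmod p)\<^sup>2 + 2 * (cmod q)\<^sup>2"
proof -
  have "cmod (p - q) \<le> cmod p + cmod q" by (rule norm_triangle_ineq4)
  then have "(cmod (p - q))\<^sup>2 \<le> (cmod p + cmod q)\<^sup>2" by (simp add: power_mono)
  also have "\<dots> \<le> 2 * (cmod p)\<^sup>2 + 2 * (cmod q)\<^sup>2"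
  proof -
    have "0 \<le> (cmod p - cmod q)\<^sup>2" by simp
    then show ?thesis unfolding power2_diff power2_sum by linarith
  qed
  finally show ?thesis .
qed

lemma pbf_parseval: "f \<in> parseval_bounded_frames M \<Longrightarrow> is_parseval_frame M f"
  unfolding parseval_bounded_frames_def by blast

lemma pbf_bnd: "f \<in> parseval_bounded_frames M \<Longrightarrow> \<exists>C. \<forall>x\<in>space M. norm (f x) \<le> C"
  unfolding parseval_bounded_frames_def bounded_frames_def by blast

lemma pbf_bf: "f \<in> parseval_bounded_frames M \<Longrightarrow> f \<in> bounded_frames M"
  unfolding parseval_bounded_frames_def by blast

theorem mainTheorem18:
  fixes M :: "'x::topological_space measure"
    and Fbar0 :: "('x \<Rightarrow> 'h::{chilbert_space, second_countable_topology}) set"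
    and U :: "('x \<Rightarrow> 'h) \<Rightarrow> ('h \<Rightarrow> 'h)"
    and \<sigma> :: "('x \<Rightarrow> 'h) \<Rightarrow> ('x \<Rightarrow> 'h)"
  assumes loc_compact: "locally_compact_space (euclidean :: 'x topology)"
    and borel_measure: "sets M = sets borel"
    and F_in_J1: "\<forall>f \<in> (bounded_frames M :: ('x \<Rightarrow> 'h) set). integrable M f"
    and transversal_sub: "Fbar0 \<subseteq> parseval_bounded_frames M"
    and transversal_orbit: "\<forall>f \<in> parseval_bounded_frames M.
          \<exists>!g. g \<in> Fbar0 \<and> (\<exists>V. unitary V \<and> g = V \<circ> f)"
    and factorization: "\<forall>f \<in> parseval_bounded_frames M.
          unitary (U f) \<and> \<sigma> f \<in> Fbar0 \<and> f = U f \<circ> \<sigma> f"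
    and sigma_cont: "\<forall>f \<in> parseval_bounded_frames M. \<forall>e>0. \<exists>d>0.
          \<forall>g \<in> parseval_bounded_frames M. J1_dist M g f < d \<longrightarrow> J1_dist M (\<sigma> g) (\<sigma> f) < e"
  shows "\<forall>f \<in> parseval_bounded_frames M. \<forall>e>0. \<exists>d>0.
          \<forall>g \<in> parseval_bounded_frames M. J1_dist M g f < d \<longrightarrow> onorm (\<lambda>v. U g v - U f v) < e"
proof (intro ballI allI impI)
  fix f :: "'x \<Rightarrow> 'h" and e :: real
  assume fP: "f \<in> parseval_bounded_frames M" and e: "e > 0"
  let ?P = "parseval_bounded_frames M"
  have sfP: "\<sigma> f \<in> ?P" using factorization fP transversal_sub by blast
  obtain Cf where Cf: "\<forall>x\<in>space M. norm (f x) \<le> Cf" using pbf_bnd[OF fP] by blast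
  obtain Cs where Cs: "\<forall>x\<in>space M. norm (\<sigma> f x) \<le> Cs" using pbf_bnd[OF sfP] by blast
  define C where "C = max 1 (max Cf Cs)"
  have Cpos: "C > 0" unfolding C_def by simp
  have Cf': "\<forall>x\<in>space M. norm (f x) \<le> C" using Cf unfolding C_def by (meson max.coboundedI1 max.coboundedI2 order_trans)
  have Cs': "\<forall>x\<in>space M. norm (\<sigma> f x) \<le> C" using Cs unfolding C_def by (meson max.coboundedI2 order_trans)
  define \<epsilon> where "\<epsilon> = e\<^sup>2 / (8 * C)"
  have \<epsilon>pos: "\<epsilon> > 0" unfolding \<epsilon>_def using e Cpos by simp
  obtain d1 where d1: "d1 > 0" and
    d1c: "\<forall>g \<in> ?P. J1_dist M g f < d1 \<longrightarrow> J1_dist M (\<sigma> g) (\<sigma> f) < \<epsilon>"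
    using sigma_cont fP \<epsilon>pos by blast
  show "\<exists>d>0. \<forall>g \<in> ?P. J1_dist M g f < d \<longrightarrow> onorm (\<lambda>v. U g v - U f v) < e"
  proof (intro exI[of _ "min d1 \<epsilon>"] conjI ballI impI)
    show "min d1 \<epsilon> > 0" using d1 \<epsilon>pos by simp
    fix g assume gP: "g \<in> ?P" and gd: "J1_dist M g f < min d1 \<epsilon>"
    have sgP: "\<sigma> g \<in> ?P" using factorization gP transversal_sub by blast
    define D1 where "D1 = J1_dist M (\<sigma> g) (\<sigma> f)"
    define D2 where "D2 = J1_dist M g f"
    have D1l: "D1 < \<epsilon>" using d1c gP gd unfolding D1_def by auto
    have D2l: "D2 < \<epsilon>" using gd unfolding D2_def by auto
    have intg: "\<And>h1 h2 :: 'x \<Rightarrow> 'h. h1 \<in> ?P \<Longrightarrow> h2 \<in> ?P \<Longrightarrow> integrable M (\<lambda>x. norm (h1 x - h2 x))"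
    proof -
      fix h1 h2 :: "'x \<Rightarrow> 'h" assume "h1 \<in> ?P" "h2 \<in> ?P"
      then have "integrable M h1" "integrable M h2" using F_in_J1 pbf_bf by auto
      then show "integrable M (\<lambda>x. norm (h1 x - h2 x))" by (intro integrable_norm Bochner_Integration.integrable_diff)
    qed
    have D1n: "D1 \<ge> 0" unfolding D1_def J1_dist_def by simp
    have D2n: "D2 \<ge> 0" unfolding D2_def J1_dist_def by simp
    have Ug: "unitary (U g)" and gfac: "g = U g \<circ> \<sigma> g" using factorization gP by auto
    have Uf: "unitary (U f)" and ffac: "f = U f \<circ> \<sigma> f" using factorization fP by auto
    define B where "B = 4 * C * (D1 + D2)"
    have B0: "B \<ge> 0" unfolding B_def using Cpos D1n D2n by simp
    have main: "(norm (U g v - U f v))\<^sup>2 \<le> B * (norm v)\<^sup>2" for v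
    proof -
      define w where "w = U g v - U f v"
      define u where "u = U f v"
      have nu: "norm u = norm v" unfolding u_def using unitary_norm[OF Uf] .
      have ip: "cinner w (g x) = cinner v (\<sigma> g x - \<sigma> f x) - cinner u (g x - f x)" for x
      proof -
        have "cinner (U g v) (g x) = cinner v (\<sigma> g x)"
          using Ug unfolding unitary_def by (subst gfac) simp
        moreover have "cinner (U f v) (f x) = cinner v (\<sigma> f x)"
          using Uf unfolding unitary_def by (subst ffac) simp
        ultimately show ?thesis unfolding w_def u_def
          by (simp add: my_cinner_diff_left my_cinner_diff_right)
      qed
      have mp: "(\<lambda>x. cinner v (\<sigma> g x - \<sigma> f x)) \<in> borel_measurable M"
        using parseval_meas[OF pbf_parseval[OF sgP]] parseval_meas[OF pbf_parseval[OF sfP]]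
        by (simp add: my_cinner_diff_right)
      have mq: "(\<lambda>x. cinner u (g x - f x)) \<in> borel_measurable M"
        using parseval_meas[OF pbf_parseval[OF gP]] parseval_meas[OF pbf_parseval[OF fP]]
        by (simp add: my_cinner_diff_right)
      have k1: "(\<integral>\<^sup>+ x. ennreal ((cmod (cinner v (\<sigma> g x - \<sigma> f x)))\<^sup>2) \<partial>M) \<le> ennreal (2 * C * (norm v)\<^sup>2 * D1)"
        unfolding D1_def J1_dist_def
        by (rule key[OF pbf_parseval[OF sgP] pbf_parseval[OF sfP] Cs' intg[OF sgP sfP]])
      have k2: "(\<integral>\<^sup>+ x. ennreal ((cmod (cinner u (g x - f x)))\<^sup>2) \<partial>M) \<le> ennreal (2 * C * (norm v)\<^sup>2 * D2)"
        unfolding D2_def J1_dist_def nu[symmetric]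
        by (rule key[OF pbf_parseval[OF gP] pbf_parseval[OF fP] Cf' intg[OF gP fP]])
      have "ennreal ((norm w)\<^sup>2) = (\<integral>\<^sup>+ x. ennreal ((cmod (cinner w (g x)))\<^sup>2) \<partial>M)"
        using parseval_eq[OF pbf_parseval[OF gP]] by simp
      also have "\<dots> \<le> (\<integral>\<^sup>+ x. ennreal 2 * ennreal ((cmod (cinner v (\<sigma> g x - \<sigma> f x)))\<^sup>2)
                 + ennreal 2 * ennreal ((cmod (cinner u (g x - f x)))\<^sup>2) \<partial>M)"
        unfolding ip
      proof (rule nn_integral_mono)
        fix x
        let ?A = "(cmod (cinner v (\<sigma> g x - \<sigma> f x)))\<^sup>2"
        let ?B = "(cmod (cinner u (g x - f x)))\<^sup>2"
        have "ennreal ((cmod (cinner v (\<sigma> g x - \<sigma> f x) - cinner u (g x - f x)))\<^sup>2) \<le> ennreal (2 * ?A + 2 * ?B)"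
          by (rule ennreal_leI[OF sq_ineq])
        also have "\<dots> = ennreal 2 * ennreal ?A + ennreal 2 * ennreal ?B"
          by (simp add: ennreal_plus ennreal_mult)
        finally show "ennreal ((cmod (cinner v (\<sigma> g x - \<sigma> f x) - cinner u (g x - f x)))\<^sup>2) \<le> ennreal 2 * ennreal ?A + ennreal 2 * ennreal ?B" .
      qed
      also have "\<dots> = ennreal 2 * (\<integral>\<^sup>+ x. ennreal ((cmod (cinner v (\<sigma> g x - \<sigma> f x)))\<^sup>2) \<partial>M)
                 + ennreal 2 * (\<integral>\<^sup>+ x. ennreal ((cmod (cinner u (g x - f x)))\<^sup>2) \<partial>M)"
        using mp mq by (subst nn_integral_add) (auto simp: nn_integral_cmult)
      also have "\<dots> \<le> ennreal 2 * ennreal (2 * C * (norm v)\<^sup>2 * D1) + ennreal 2 * ennreal (2 * C * (norm v)\<^sup>2 * D2)"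
        using k1 k2 by (intro add_mono mult_left_mono) auto
      also have "\<dots> = ennreal (B * (norm v)\<^sup>2)"
      proof -
        define X where "X = 2 * C * (norm v)\<^sup>2 * D1"
        define Y where "Y = 2 * C * (norm v)\<^sup>2 * D2"
        have X0: "X \<ge> 0" unfolding X_def using Cpos D1n by simp
        have Y0: "Y \<ge> 0" unfolding Y_def using Cpos D2n by simp
        have "ennreal 2 * ennreal X + ennreal 2 * ennreal Y = ennreal (2 * X) + ennreal (2 * Y)"
          using X0 Y0 by (simp add: ennreal_mult)
        also have "\<dots> = ennreal (2 * X + 2 * Y)"
          using X0 Y0 by (intro ennreal_plus[symmetric]) auto
        also have "2 * X + 2 * Y = B * (norm v)\<^sup>2"
          unfolding X_def Y_def B_def by (simp add: algebra_simps)
        finally show ?thesis unfolding X_def Y_def .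
      qed
      finally show ?thesis unfolding w_def using B0 by (simp add: ennreal_le_iff)
    qed
    have "onorm (\<lambda>v. U g v - U f v) \<le> sqrt B"
    proof (rule onorm_bound)
      show "0 \<le> sqrt B" using B0 by simp
      fix v
      have "norm (U g v - U f v) \<le> sqrt (B * (norm v)\<^sup>2)"
        using main[of v] by (simp add: real_le_rsqrt)
      also have "\<dots> = sqrt B * norm v" by (simp add: real_sqrt_mult)
      finally show "norm (U g v - U f v) \<le> sqrt B * norm v" .
    qed
    also have "sqrt B < e"
    proof -
      have "B < 4 * C * (2 * \<epsilon>)" unfolding B_def using D1l D2l Cpos by simp
      also have "\<dots> = e\<^sup>2" unfolding \<epsilon>_def using Cpos by simp
      finally show ?thesis using e by (simp add: real_sqrt_less_iff real_less_lsqrt)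
    qed
    finally show "onorm (\<lambda>v. U g v - U f v) < e" .
  qed
qed

end
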